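(* Let $i\geq1$ and let $T$ be an SSRT of partition shape $\lambda$ such that $\lambda$ has an addable node in column $i+1$. Then, as multisets, $$H_i(\mathrm{tjdt}_{i+1}(T))\cup\{f_{i+1}(T)\}=H_{i+1}(T).$$
   Context: SSRTs (French convention, rows numbered from bottom, $(p,q)$ = row $p$, column $q$): fillings of a partition shape by positive integers weakly decreasing along rows left to right and strictly decreasing up columns. Backward jeu de taquin slide $\mathrm{jdt}_j(T)$ from the addable node in column $j$: the empty box $c=(p,q)$, starting at the addable node, is filled by sliding in the entry from whichever of $(p-1,q)$, $(p,q-1)$ (that exist) holds the smaller entry, ties going to $(p-1,q)$; this repeats until the empty box is $(1,1)$. $H_j(T)$ denotes the multiset of entries of $T$ that move horizontally during the computation of $\mathrm{jdt}_j(T)$, and $H_1(T)=\varnothing$. With $T_{(p,q)}=0$ outside $\lambda$ and $T_{(0,q)}=\infty$, $f_{i+1}(T)=T_{(r,i)}$ where $r$ is the largest integer with $(r,i)\in\lambda$ and $T_{(r,i)}<T_{(r-1,i+1)}$ (the first entry moving horizontally in $\mathrm{jdt}_{i+1}(T)$), and $\mathrm{tjdt}_{i+1}(T)$ is obtained from $T$ by removing $T_{(r,i)}$ and sliding all entries above it in column $i$ down by one row. *)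

theory Defs
  imports "HOL-Library.Multiset"
begin

(* French convention: a cell is (p,q) = (row p, column q), rows numbered from the bottom,
   both indices starting at 1. A partition shape is a finite down-left closed set of cells. *)

definition is_shape :: "(nat \<times> nat) set \<Rightarrow> bool" where
  "is_shape D \<longleftrightarrow> finite D \<and> (\<forall>(p,q)\<in>D. 1 \<le> p \<and> 1 \<le> q) \<and>
     (\<forall>p q p' q'. (p,q) \<in> D \<and> 1 \<le> p' \<and> p' \<le> p \<and> 1 \<le> q' \<and> q' \<le> q \<longrightarrow> (p',q') \<in> D)"

definition ssrt :: "(nat \<times> nat) set \<Rightarrow> (nat \<times> nat \<Rightarrow> nat) \<Rightarrow> bool" where
  "ssrt D T \<longleftrightarrow> is_shape D \<and> (\<forall>c\<in>D. 1 \<le> T c) \<and>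
     (\<forall>p q. (p,q) \<in> D \<and> (p,q+1) \<in> D \<longrightarrow> T (p,q+1) \<le> T (p,q)) \<and>
     (\<forall>p q. (p,q) \<in> D \<and> (p+1,q) \<in> D \<longrightarrow> T (p+1,q) < T (p,q))"

definition addable :: "(nat \<times> nat) set \<Rightarrow> nat \<times> nat \<Rightarrow> bool" where
  "addable D c \<longleftrightarrow> fst c \<ge> 1 \<and> snd c \<ge> 1 \<and> c \<notin> D \<and> is_shape (insert c D)"

definition tv :: "(nat \<times> nat) set \<Rightarrow> (nat \<times> nat \<Rightarrow> nat) \<Rightarrow> nat \<times> nat \<Rightarrow> nat" where
  "tv D T c = (if c \<in> D then T c else 0)"

(* multiset of entries moving horizontally during the backward jdt slide whose
   empty box is currently at (p,q); ties go to the vertical move *)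
function hmoves :: "(nat \<times> nat) set \<Rightarrow> (nat \<times> nat \<Rightarrow> nat) \<Rightarrow> nat \<Rightarrow> nat \<Rightarrow> nat multiset" where
  "hmoves D T p q =
    (if 2 \<le> p \<and> (p-1,q) \<in> D \<and> 2 \<le> q \<and> (p,q-1) \<in> D then
       (if T (p,q-1) < T (p-1,q) then add_mset (T (p,q-1)) (hmoves D T p (q-1))
        else hmoves D T (p-1) q)
     else if 2 \<le> p \<and> (p-1,q) \<in> D then hmoves D T (p-1) q
     else if 2 \<le> q \<and> (p,q-1) \<in> D then add_mset (T (p,q-1)) (hmoves D T p (q-1))
     else {#})"
  by pat_completeness auto
termination by (relation "measure (\<lambda>(D,T,p,q). p + q)") auto

definition H :: "(nat \<times> nat) set \<Rightarrow> (nat \<times> nat \<Rightarrow> nat) \<Rightarrow> nat \<Rightarrow> nat multiset" where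
  "H D T j = (if j = 1 then {#} else hmoves D T (THE p. addable D (p,j)) j)"

(* r in the definition of f_{i+1}: largest r with (r,i) in the shape and
   T(r,i) < T(r-1,i+1), where T(0,q) = infinity and T = 0 outside the shape *)
definition frow :: "(nat \<times> nat) set \<Rightarrow> (nat \<times> nat \<Rightarrow> nat) \<Rightarrow> nat \<Rightarrow> nat" where
  "frow D T i = (GREATEST r. (r,i) \<in> D \<and> (r = 1 \<or> tv D T (r,i) < tv D T (r-1,i+1)))"

definition f :: "(nat \<times> nat) set \<Rightarrow> (nat \<times> nat \<Rightarrow> nat) \<Rightarrow> nat \<Rightarrow> nat" where
  "f D T j = T (frow D T (j-1), j-1)"

definition colheight :: "(nat \<times> nat) set \<Rightarrow> nat \<Rightarrow> nat" where
  "colheight D q = card {p. (p,q) \<in> D}"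

definition tjdt_shape :: "(nat \<times> nat) set \<Rightarrow> nat \<Rightarrow> (nat \<times> nat) set" where
  "tjdt_shape D j = D - {(colheight D (j-1), j-1)}"

definition tjdt :: "(nat \<times> nat) set \<Rightarrow> (nat \<times> nat \<Rightarrow> nat) \<Rightarrow> nat \<Rightarrow> (nat \<times> nat \<Rightarrow> nat)" where
  "tjdt D T j = (\<lambda>(p,q). if q = j-1 \<and> frow D T (j-1) \<le> p then T (p+1,q) else T (p,q))"

end

theory Submission
  imports Defs
begin

declare hmoves.simps[simp del]

lemma shape_closed:
  assumes "is_shape D" "(p,q)\<in>D" "1\<le>p'" "p'\<le>p" "1\<le>q'" "q'\<le>q"
  shows "(p',q')\<in>D"
  using assms unfolding is_shape_def by blast

lemma shape_pos:
  assumes "is_shape D" "(p,q)\<in>D" shows "1 \<le> p" "1 \<le> q"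
  using assms unfolding is_shape_def by auto

lemma col_eq:
  assumes "is_shape D"
  shows "(a,q)\<in>D \<longleftrightarrow> (1 \<le> a \<and> a \<le> colheight D q)"
proof -
  define S where "S = {p. (p,q)\<in>D}"
  have fin: "finite S"
  proof -
    have "S \<subseteq> fst ` D" unfolding S_def by force
    moreover have "finite D" using assms unfolding is_shape_def by auto
    ultimately show ?thesis using finite_subset by blast
  qed
  show ?thesis
  proof (cases "S = {}")
    case True
    then show ?thesis unfolding colheight_def S_def[symmetric] by (auto simp: S_def)
  next
    case False
    define m where "m = Max S"
    have mS: "m \<in> S" using False fin m_def by auto
    have "S = {1..m}"
    proof
      show "S \<subseteq> {1..m}" using fin m_def assms shape_pos(1) by (auto simp: S_def)
      show "{1..m} \<subseteq> S"
      proof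
        fix x assume "x \<in> {1..m}"
        moreover have "(m,q)\<in>D" using mS S_def by auto
        moreover have "1 \<le> q" using shape_pos(2)[OF assms \<open>(m,q)\<in>D\<close>] .
        ultimately show "x \<in> S" using shape_closed[OF assms] by (auto simp: S_def)
      qed
    qed
    then show ?thesis unfolding colheight_def S_def[symmetric] by (auto simp: S_def)
  qed
qed

lemma addable_unique:
  assumes "addable D (p,j)" "addable D (p',j)" shows "p = p'"
proof (rule ccontr)
  assume "p \<noteq> p'"
  then consider "p < p'" | "p' < p" by linarith
  then show False
  proof cases
    case 1
    have "(p,j) \<in> insert (p',j) D"
      using assms shape_closed[of "insert (p',j) D" p' j p j] 1 unfolding addable_def by auto
    then show False using 1 assms unfolding addable_def by auto
  next
    case 2
    have "(p',j) \<in> insert (p,j) D"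
      using assms shape_closed[of "insert (p,j) D" p j p' j] 2 unfolding addable_def by auto
    then show False using 2 assms unfolding addable_def by auto
  qed
qed

lemma hmoves_col1: "hmoves D T p 1 = {#}"
proof (induction p)
  case 0 show ?case by (subst hmoves.simps) simp
next
  case (Suc p) then show ?case by (subst hmoves.simps) (simp del: hmoves.simps)
qed

lemma hmoves_cong_aux:
  "\<forall>p q. p + q = n \<longrightarrow> (\<forall>a b. a \<le> p \<longrightarrow> b \<le> q \<longrightarrow> (a,b) \<noteq> (p,q) \<longrightarrow> ((a,b)\<in>D' \<longleftrightarrow> (a,b)\<in>D) \<and> T' (a,b) = T (a,b)) \<longrightarrow> hmoves D' T' p q = hmoves D T p q"
proof (induction n rule: less_induct)
  case (less n)
  show ?case
  proof (intro allI impI)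
    fix p q assume pq: "p + q = n" and A: "\<forall>a b. a \<le> p \<longrightarrow> b \<le> q \<longrightarrow> (a,b) \<noteq> (p,q) \<longrightarrow> ((a,b)\<in>D' \<longleftrightarrow> (a,b)\<in>D) \<and> T' (a,b) = T (a,b)"
    have h1: "hmoves D' T' (p-1) q = hmoves D T (p-1) q" if "2 \<le> p"
    proof -
      have "p-1+q < n" using that pq by simp
      moreover have "\<forall>a b. a \<le> p-1 \<longrightarrow> b \<le> q \<longrightarrow> (a,b) \<noteq> (p-1,q) \<longrightarrow> ((a,b)\<in>D' \<longleftrightarrow> (a,b)\<in>D) \<and> T' (a,b) = T (a,b)"
      proof (intro allI impI)
        fix a b assume "a \<le> p-1" "b \<le> q" "(a,b) \<noteq> (p-1,q)"
        then show "((a,b)\<in>D' \<longleftrightarrow> (a,b)\<in>D) \<and> T' (a,b) = T (a,b)"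
        proof -
          have "a \<le> p" "b \<le> q" "(a,b) \<noteq> (p,q)" using that \<open>a \<le> _\<close> \<open>b \<le> _\<close> by auto
          then show ?thesis using A by blast
        qed
      qed
      ultimately show ?thesis using less by blast
    qed
    have h2: "hmoves D' T' p (q-1) = hmoves D T p (q-1)" if "2 \<le> q"
    proof -
      have "p+(q-1) < n" using that pq by simp
      moreover have "\<forall>a b. a \<le> p \<longrightarrow> b \<le> q-1 \<longrightarrow> (a,b) \<noteq> (p,q-1) \<longrightarrow> ((a,b)\<in>D' \<longleftrightarrow> (a,b)\<in>D) \<and> T' (a,b) = T (a,b)"
      proof (intro allI impI)
        fix a b assume "a \<le> p" "b \<le> q-1" "(a,b) \<noteq> (p,q-1)"
        then show "((a,b)\<in>D' \<longleftrightarrow> (a,b)\<in>D) \<and> T' (a,b) = T (a,b)"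
        proof -
          have "a \<le> p" "b \<le> q" "(a,b) \<noteq> (p,q)" using that \<open>a \<le> _\<close> \<open>b \<le> _\<close> by auto
          then show ?thesis using A by blast
        qed
      qed
      ultimately show ?thesis using less by blast
    qed
    have e1: "((p-1,q)\<in>D') = ((p-1,q)\<in>D)" "T' (p-1,q) = T (p-1,q)" if "2 \<le> p"
      using A[rule_format, of "p-1" q] that by auto
    have e2: "((p,q-1)\<in>D') = ((p,q-1)\<in>D)" "T' (p,q-1) = T (p,q-1)" if "2 \<le> q"
      using A[rule_format, of p "q-1"] that by auto
    show "hmoves D' T' p q = hmoves D T p q"
      apply (subst (1 2) hmoves.simps)
      using h1 h2 e1 e2 by (auto simp del: hmoves.simps)
  qed
qed

lemma hmoves_cong:
  assumes "\<And>a b. a \<le> p \<Longrightarrow> b \<le> q \<Longrightarrow> (a,b) \<noteq> (p,q) \<Longrightarrow> ((a,b)\<in>D' \<longleftrightarrow> (a,b)\<in>D) \<and> T' (a,b) = T (a,b)"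
  shows "hmoves D' T' p q = hmoves D T p q"
  using hmoves_cong_aux[where n="p+q" and D'=D' and D=D and T'=T' and T=T] assms by blast

theorem lemma6p4:
  fixes D :: "(nat \<times> nat) set" and T :: "nat \<times> nat \<Rightarrow> nat" and i :: nat
  assumes "1 \<le> i"
    and "ssrt D T"
    and "\<exists>p. addable D (p, i+1)"
  shows "H (tjdt_shape D (i+1)) (tjdt D T (i+1)) i + {# f D T (i+1) #} = H D T (i+1)"
proof -
  note i1 = assms(1)
  have shD: "is_shape D" using assms(2) unfolding ssrt_def by auto
  have rowdec: "\<And>p q. (p,q) \<in> D \<Longrightarrow> (p,q+1) \<in> D \<Longrightarrow> T (p,q+1) \<le> T (p,q)"
    using assms(2) unfolding ssrt_def by blast
  obtain p0 where ad: "addable D (p0, i+1)" using assms(3) by blast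
  have p0pos: "1 \<le> p0" and p0n: "(p0,i+1) \<notin> D" and shI: "is_shape (insert (p0,i+1) D)"
    using ad unfolding addable_def by auto
  have p0i: "(p0,i) \<in> D"
    using shape_closed[OF shI, of p0 "i+1" p0 i] p0pos i1 by auto
  have above: "\<And>p. p0 \<le> p \<Longrightarrow> (p,i+1) \<notin> D"
    using shape_closed[OF shD, of _ "i+1" p0 "i+1"] p0n p0pos by fastforce
  have below: "\<And>p. 1 \<le> p \<Longrightarrow> p < p0 \<Longrightarrow> (p,i+1) \<in> D"
    using shape_closed[OF shI, of p0 "i+1" _ "i+1"] by fastforce
  define h where "h = colheight D i"
  have colI: "\<And>a. (a,i) \<in> D \<longleftrightarrow> 1 \<le> a \<and> a \<le> h"
    using col_eq[OF shD] h_def by blast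
  have hp0: "p0 \<le> h" using colI p0i by blast
  have colim1: "\<And>a. 2 \<le> i \<Longrightarrow> 1 \<le> a \<Longrightarrow> a \<le> h \<Longrightarrow> (a,i-1) \<in> D"
    using shape_closed[OF shD, of _ i _ "i-1"] colI by fastforce
  define P where "P = (\<lambda>r. (r,i) \<in> D \<and> (r = 1 \<or> tv D T (r,i) < tv D T (r-1,i+1)))"
  define r where "r = frow D T i"
  have rdef: "r = Greatest P" unfolding r_def frow_def P_def by simp
  have P1: "P 1" unfolding P_def using colI p0pos hp0 by auto
  have Pbd: "\<And>y. P y \<Longrightarrow> y \<le> h" unfolding P_def using colI by blast
  have Pr: "P r" using GreatestI_nat[of P 1 h, OF P1 Pbd] rdef by simp
  have rmax: "\<And>y. P y \<Longrightarrow> y \<le> r" using Greatest_le_nat[of P _ h] Pbd rdef by blast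
  have rD: "(r,i) \<in> D" using Pr P_def by auto
  have r1: "1 \<le> r" using rD colI by auto
  have rh: "r \<le> h" using rD colI by auto
  have rp0: "r \<le> p0"
  proof (rule ccontr)
    assume "\<not> r \<le> p0"
    then have "r \<noteq> 1" "(r-1,i+1) \<notin> D" using p0pos above by auto
    then show False using Pr unfolding P_def tv_def by auto
  qed
  have A: "\<And>k. r + k \<le> p0 \<Longrightarrow> hmoves D T (r+k) (i+1) = add_mset (T (r,i)) (hmoves D T r i)"
  proof -
    fix k show "r + k \<le> p0 \<Longrightarrow> hmoves D T (r+k) (i+1) = add_mset (T (r,i)) (hmoves D T r i)"
    proof (induction k)
      case 0
      show ?case
      proof (cases "r = 1")
        case True
        then show ?thesis using rD i1 by (subst hmoves.simps) simp
      next
        case False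
        then have "2 \<le> r" using r1 by simp
        moreover have "(r-1,i+1) \<in> D" using below \<open>2 \<le> r\<close> rp0 by simp
        moreover have "T (r,i) < T (r-1,i+1)" using Pr False \<open>(r-1,i+1) \<in> D\<close> rD
          unfolding P_def tv_def by simp
        ultimately show ?thesis using rD i1 by (subst hmoves.simps) simp
      qed
    next
      case (Suc k)
      define p where "p = r + Suc k"
      have p2: "2 \<le> p" using r1 p_def by simp
      have a1: "(p-1,i+1) \<in> D" using below p2 Suc.prems p_def by simp
      have a2: "(p,i) \<in> D" using colI p2 Suc.prems p_def hp0 by simp
      have "\<not> T (p,i) < T (p-1,i+1)"
      proof
        assume "T (p,i) < T (p-1,i+1)"
        then have "P p" unfolding P_def tv_def using a1 a2 by simp
        then show False using rmax p_def by fastforce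
      qed
      then have "hmoves D T p (i+1) = hmoves D T (p-1) (i+1)"
        using a1 a2 p2 by (subst hmoves.simps) simp
      moreover have "p - 1 = r + k" using p_def by simp
      ultimately show ?case using Suc p_def by simp
    qed
  qed
  have HD: "H D T (i+1) = add_mset (T (r,i)) (hmoves D T r i)"
  proof -
    have "(THE p. addable D (p,i+1)) = p0"
      using ad addable_unique by blast
    then have "H D T (i+1) = hmoves D T p0 (i+1)" unfolding H_def using i1 by simp
    also have "\<dots> = add_mset (T (r,i)) (hmoves D T r i)" using A[of "p0 - r"] rp0 by simp
    finally show ?thesis .
  qed
  have fv: "f D T (i+1) = T (r,i)" unfolding f_def r_def by simp
  show ?thesis
  proof (cases "i = 1")
    case True
    then show ?thesis using HD fv hmoves_col1 unfolding H_def by simp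
  next
    case False
    then have i2: "2 \<le> i" using i1 by simp
    define D' where "D' = tjdt_shape D (i+1)"
    define T' where "T' = tjdt D T (i+1)"
    have D'eq: "D' = D - {(h,i)}" unfolding D'_def tjdt_shape_def h_def by simp
    have T'eq: "\<And>a b. T' (a,b) = (if b = i \<and> r \<le> a then T (a+1,b) else T (a,b))"
      unfolding T'_def tjdt_def r_def by simp
    have hD: "(h,i) \<in> D" using colI hp0 p0pos by simp
    have adh: "addable D' (h,i)"
    proof -
      have "insert (h,i) D' = D" using D'eq hD by auto
      then show ?thesis unfolding addable_def using hp0 p0pos i1 D'eq shD by auto
    qed
    have theh: "(THE p. addable D' (p,i)) = h" using adh addable_unique by blast
    have B: "\<And>k. r + k \<le> h \<Longrightarrow> hmoves D' T' (r+k) i = hmoves D' T' r i"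
    proof -
      fix k show "r + k \<le> h \<Longrightarrow> hmoves D' T' (r+k) i = hmoves D' T' r i"
      proof (induction k)
        case 0 then show ?case by simp
      next
        case (Suc k)
        define p where "p = r + Suc k"
        have p2: "2 \<le> p" using r1 p_def by simp
        have a1: "(p-1,i) \<in> D'" using colI D'eq p2 Suc.prems p_def by simp
        have a2: "(p,i-1) \<in> D'" using colim1[OF i2, of p] D'eq p2 Suc.prems p_def i2 by auto
        have pD: "(p,i) \<in> D" "(p,i-1) \<in> D" using a2 colI p2 Suc.prems p_def D'eq by auto
        have "T (p,i) \<le> T (p,i-1)" using rowdec[of p "i-1"] pD i2 by simp
        moreover have "T' (p,i-1) = T (p,i-1)" using T'eq[of p "i-1"] i2 by auto
        moreover have "T' (p-1,i) = T (p,i)" using T'eq p_def p2 by simp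
        ultimately have "\<not> T' (p,i-1) < T' (p-1,i)" by simp
        then have "hmoves D' T' p i = hmoves D' T' (p-1) i"
          using a1 a2 p2 i2 by (subst hmoves.simps) simp
        moreover have "p - 1 = r + k" using p_def by simp
        ultimately show ?case using Suc p_def by simp
      qed
    qed
    have C: "hmoves D' T' r i = hmoves D T r i"
    proof (rule hmoves_cong)
      fix a b assume ab: "a \<le> r" "b \<le> i" "(a,b) \<noteq> (r,i)"
      have "(a,b) \<noteq> (h,i)" using ab rh by auto
      then show "((a,b)\<in>D' \<longleftrightarrow> (a,b)\<in>D) \<and> T' (a,b) = T (a,b)"
        using D'eq T'eq ab by auto
    qed
    have "H D' T' i = hmoves D' T' h i" unfolding H_def using False theh by simp
    also have "\<dots> = hmoves D' T' r i" using B[of "h - r"] rh by simp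
    also have "\<dots> = hmoves D T r i" using C .
    finally show ?thesis using HD fv unfolding D'_def T'_def by simp
  qed
qed


end
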